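(* For a semiring $(S,+,\cdot)$ the following are equivalent: (i) $S$ is a b-lattice of nil-extensions of rectangular skew-rings; (ii) $S$ is a quasi completely regular semiring and for all $e,f\in E^+(S)$ there exists a positive integer $n$ such that $n(e+f)=(n+1)(e+f)$; (iii) $S$ is additively quasi regular, $b^2\,\mathscr{H}^{*^{+}}\,b$ for all $b\in S$, and for all $a,x\in S$, $a=a+x+a$ implies $a=a+2x+2a$.
   Context: A semiring $(S,+,\cdot)$ has two associative operations with $a(b+c)=ab+ac$, $(b+c)a=ba+ca$. For a positive integer $n$, $na=a+\dots+a$ ($n$ terms); $b^2=b\cdot b$. $E^+(S)$ is the set of additive idempotents. $a$ is additively regular if $a=a+x+a$ for some $x\in S$; $S$ is additively quasi regular if for each $a$ some $na$ is additively regular. $a$ is completely regular if there is $x$ with $a=a+x+a$, $a+x=x+a$, $a(a+x)=a+x$; $S$ is quasi completely regular if for each $a\in S$ some $na$ is completely regular. Green's relations of $(S,+)$ are denoted $\mathscr{L}^+,\mathscr{R}^+,\mathscr{J}^+,\mathscr{H}^+$. For additively quasi regular $S$ and $a\in S$, let $m(a)$ be the least positive integer with $m(a)a$ additively regular; define $a\,\mathscr{L}^{*^{+}}\,b$ iff $m(a)a\,\mathscr{L}^+\,m(b)b$, $a\,\mathscr{R}^{*^{+}}\,b$ iff $m(a)a\,\mathscr{R}^+\,m(b)b$, and $\mathscr{H}^{*^{+}}=\mathscr{L}^{*^{+}}\cap\mathscr{R}^{*^{+}}$. A completely simple semiring is a semiring in which every element is completely regular and $\mathscr{J}^+=S\times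 S$. A rectangular skew-ring is a completely simple semiring $K$ with $E^+(K)$ a subsemigroup of $(K,+)$. A semiring $S$ is a nil-extension of a subsemiring $K$ if $K$ is a bi-ideal of $S$ (for $a\in K$, $x\in S$: $a+x,x+a,ax,xa\in K$) and for every $a\in S$ there is $n\ge1$ with $na\in K$. A b-lattice is a semiring with $(S,\cdot)$ a band and $(S,+)$ a semilattice. $S$ is a b-lattice of semirings of a given class if there is a congruence $\rho$ on $S$ with $S/\rho$ a b-lattice and every $\rho$-class a subsemiring of that class. *)

theory Defs
  imports Main
begin

text \<open>A semiring is given by two binary operations pl (addition) and ml
 (multiplication) on a type; no zero, identity or commutativity is assumed.
 Subsemirings are subsets closed under both operations.\<close>

definition semiring :: "('a \<Rightarrow> 'a \<Rightarrow> 'a) \<Rightarrow> ('a \<Rightarrow> 'a \<Rightarrow> 'a) \<Rightarrow> bool" where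
  "semiring pl ml \<longleftrightarrow>
     (\<forall>a b c. pl (pl a b) c = pl a (pl b c)) \<and>
     (\<forall>a b c. ml (ml a b) c = ml a (ml b c)) \<and>
     (\<forall>a b c. ml a (pl b c) = pl (ml a b) (ml a c)) \<and>
     (\<forall>a b c. ml (pl b c) a = pl (ml b a) (ml c a))"

definition closed_sub :: "('a \<Rightarrow> 'a \<Rightarrow> 'a) \<Rightarrow> ('a \<Rightarrow> 'a \<Rightarrow> 'a) \<Rightarrow> 'a set \<Rightarrow> bool" where
  "closed_sub pl ml A \<longleftrightarrow> (\<forall>a\<in>A. \<forall>b\<in>A. pl a b \<in> A \<and> ml a b \<in> A)"

text \<open>n-fold sum n a = a + ... + a, for n \<ge> 1 (the value at 0 is irrelevant).\<close>
fun nsm :: "('a \<Rightarrow> 'a \<Rightarrow> 'a) \<Rightarrow> nat \<Rightarrow> 'a \<Rightarrow> 'a" where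
  "nsm pl 0 a = a"
| "nsm pl (Suc 0) a = a"
| "nsm pl (Suc (Suc n)) a = pl (nsm pl (Suc n) a) a"

definition addE :: "('a \<Rightarrow> 'a \<Rightarrow> 'a) \<Rightarrow> 'a set \<Rightarrow> 'a set" where
  "addE pl A = {e \<in> A. pl e e = e}"

definition add_regular :: "'a set \<Rightarrow> ('a \<Rightarrow> 'a \<Rightarrow> 'a) \<Rightarrow> 'a \<Rightarrow> bool" where
  "add_regular A pl a \<longleftrightarrow> (\<exists>x\<in>A. a = pl (pl a x) a)"

definition compl_regular ::
  "'a set \<Rightarrow> ('a \<Rightarrow> 'a \<Rightarrow> 'a) \<Rightarrow> ('a \<Rightarrow> 'a \<Rightarrow> 'a) \<Rightarrow> 'a \<Rightarrow> bool" where
  "compl_regular A pl ml a \<longleftrightarrow>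
     (\<exists>x\<in>A. a = pl (pl a x) a \<and> pl a x = pl x a \<and> ml a (pl a x) = pl a x)"

definition add_quasi_regular :: "('a \<Rightarrow> 'a \<Rightarrow> 'a) \<Rightarrow> bool" where
  "add_quasi_regular pl \<longleftrightarrow> (\<forall>a. \<exists>n\<ge>1. add_regular UNIV pl (nsm pl n a))"

definition quasi_compl_regular :: "('a \<Rightarrow> 'a \<Rightarrow> 'a) \<Rightarrow> ('a \<Rightarrow> 'a \<Rightarrow> 'a) \<Rightarrow> bool" where
  "quasi_compl_regular pl ml \<longleftrightarrow> (\<forall>a. \<exists>n\<ge>1. compl_regular UNIV pl ml (nsm pl n a))"

text \<open>Green's relations of the semigroup (A,+), via principal one-sided / two-sided ideals
  of A^1.\<close>
definition lideal :: "'a set \<Rightarrow> ('a \<Rightarrow> 'a \<Rightarrow> 'a) \<Rightarrow> 'a \<Rightarrow> 'a set" where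
  "lideal A pl a = insert a ((\<lambda>s. pl s a) ` A)"

definition rideal :: "'a set \<Rightarrow> ('a \<Rightarrow> 'a \<Rightarrow> 'a) \<Rightarrow> 'a \<Rightarrow> 'a set" where
  "rideal A pl a = insert a ((\<lambda>s. pl a s) ` A)"

definition tideal :: "'a set \<Rightarrow> ('a \<Rightarrow> 'a \<Rightarrow> 'a) \<Rightarrow> 'a \<Rightarrow> 'a set" where
  "tideal A pl a = insert a ((\<lambda>s. pl s a) ` A \<union> (\<lambda>s. pl a s) ` A
                         \<union> {pl (pl s a) t | s t. s \<in> A \<and> t \<in> A})"

definition greenL :: "'a set \<Rightarrow> ('a \<Rightarrow> 'a \<Rightarrow> 'a) \<Rightarrow> 'a \<Rightarrow> 'a \<Rightarrow> bool" where
  "greenL A pl a b \<longleftrightarrow> lideal A pl a = lideal A pl b"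

definition greenR :: "'a set \<Rightarrow> ('a \<Rightarrow> 'a \<Rightarrow> 'a) \<Rightarrow> 'a \<Rightarrow> 'a \<Rightarrow> bool" where
  "greenR A pl a b \<longleftrightarrow> rideal A pl a = rideal A pl b"

definition greenJ :: "'a set \<Rightarrow> ('a \<Rightarrow> 'a \<Rightarrow> 'a) \<Rightarrow> 'a \<Rightarrow> 'a \<Rightarrow> bool" where
  "greenJ A pl a b \<longleftrightarrow> tideal A pl a = tideal A pl b"

definition mreg :: "('a \<Rightarrow> 'a \<Rightarrow> 'a) \<Rightarrow> 'a \<Rightarrow> nat" where
  "mreg pl a = (LEAST n. n \<ge> 1 \<and> add_regular UNIV pl (nsm pl n a))"

definition Lstar :: "('a \<Rightarrow> 'a \<Rightarrow> 'a) \<Rightarrow> 'a \<Rightarrow> 'a \<Rightarrow> bool" where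
  "Lstar pl a b \<longleftrightarrow> greenL UNIV pl (nsm pl (mreg pl a) a) (nsm pl (mreg pl b) b)"

definition Rstar :: "('a \<Rightarrow> 'a \<Rightarrow> 'a) \<Rightarrow> 'a \<Rightarrow> 'a \<Rightarrow> bool" where
  "Rstar pl a b \<longleftrightarrow> greenR UNIV pl (nsm pl (mreg pl a) a) (nsm pl (mreg pl b) b)"

definition Hstar :: "('a \<Rightarrow> 'a \<Rightarrow> 'a) \<Rightarrow> 'a \<Rightarrow> 'a \<Rightarrow> bool" where
  "Hstar pl a b \<longleftrightarrow> Lstar pl a b \<and> Rstar pl a b"

definition compl_simple ::
  "('a \<Rightarrow> 'a \<Rightarrow> 'a) \<Rightarrow> ('a \<Rightarrow> 'a \<Rightarrow> 'a) \<Rightarrow> 'a set \<Rightarrow> bool" where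
  "compl_simple pl ml K \<longleftrightarrow> closed_sub pl ml K \<and>
     (\<forall>a\<in>K. compl_regular K pl ml a) \<and> (\<forall>a\<in>K. \<forall>b\<in>K. greenJ K pl a b)"

definition rect_skew_ring ::
  "('a \<Rightarrow> 'a \<Rightarrow> 'a) \<Rightarrow> ('a \<Rightarrow> 'a \<Rightarrow> 'a) \<Rightarrow> 'a set \<Rightarrow> bool" where
  "rect_skew_ring pl ml K \<longleftrightarrow> compl_simple pl ml K \<and>
     (\<forall>e\<in>addE pl K. \<forall>f\<in>addE pl K. pl e f \<in> addE pl K)"

definition nil_extension ::
  "('a \<Rightarrow> 'a \<Rightarrow> 'a) \<Rightarrow> ('a \<Rightarrow> 'a \<Rightarrow> 'a) \<Rightarrow> 'a set \<Rightarrow> 'a set \<Rightarrow> bool" where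
  "nil_extension pl ml C K \<longleftrightarrow> closed_sub pl ml C \<and> K \<subseteq> C \<and> closed_sub pl ml K \<and>
     (\<forall>a\<in>K. \<forall>x\<in>C. pl a x \<in> K \<and> pl x a \<in> K \<and> ml a x \<in> K \<and> ml x a \<in> K) \<and>
     (\<forall>a\<in>C. \<exists>n\<ge>1. nsm pl n a \<in> K)"

definition congruence ::
  "('a \<Rightarrow> 'a \<Rightarrow> 'a) \<Rightarrow> ('a \<Rightarrow> 'a \<Rightarrow> 'a) \<Rightarrow> ('a \<Rightarrow> 'a \<Rightarrow> bool) \<Rightarrow> bool" where
  "congruence pl ml r \<longleftrightarrow> equivp r \<and>
     (\<forall>a b c d. r a b \<and> r c d \<longrightarrow> r (pl a c) (pl b d) \<and> r (ml a c) (ml b d))"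

text \<open>The quotient S/r is a b-lattice: (S/r,\<cdot>) is a band and (S/r,+) a semilattice
  (associativity is inherited from S), written out on representatives.\<close>
definition quotient_b_lattice ::
  "('a \<Rightarrow> 'a \<Rightarrow> 'a) \<Rightarrow> ('a \<Rightarrow> 'a \<Rightarrow> 'a) \<Rightarrow> ('a \<Rightarrow> 'a \<Rightarrow> bool) \<Rightarrow> bool" where
  "quotient_b_lattice pl ml r \<longleftrightarrow>
     (\<forall>a. r (ml a a) a) \<and> (\<forall>a. r (pl a a) a) \<and> (\<forall>a b. r (pl a b) (pl b a))"

definition b_lattice_of_nil_ext_rsr :: "('a \<Rightarrow> 'a \<Rightarrow> 'a) \<Rightarrow> ('a \<Rightarrow> 'a \<Rightarrow> 'a) \<Rightarrow> bool" where
  "b_lattice_of_nil_ext_rsr pl ml \<longleftrightarrow>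
     (\<exists>r. congruence pl ml r \<and> quotient_b_lattice pl ml r \<and>
        (\<forall>a. closed_sub pl ml {x. r a x} \<and>
             (\<exists>K. nil_extension pl ml {x. r a x} K \<and> rect_skew_ring pl ml K)))"

end

theory Submission
  imports Defs
begin

locale sr =
  fixes pl :: "'a \<Rightarrow> 'a \<Rightarrow> 'a" (infixr \<open>\<oplus>\<close> 65)
    and ml :: "'a \<Rightarrow> 'a \<Rightarrow> 'a" (infixr \<open>\<otimes>\<close> 70)
  assumes srg: "semiring pl ml"
begin

lemma pa[simp]: "(a \<oplus> b) \<oplus> c = a \<oplus> (b \<oplus> c)"
  using srg unfolding semiring_def by blast
lemma ma[simp]: "(a \<otimes> b) \<otimes> c = a \<otimes> (b \<otimes> c)"
  using srg unfolding semiring_def by blast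
lemma dl: "a \<otimes> (b \<oplus> c) = a \<otimes> b \<oplus> a \<otimes> c"
  using srg unfolding semiring_def by blast
lemma dr: "(b \<oplus> c) \<otimes> a = b \<otimes> a \<oplus> c \<otimes> a"
  using srg unfolding semiring_def by blast

abbreviation N :: "nat \<Rightarrow> 'a \<Rightarrow> 'a" where "N n a \<equiv> nsm pl n a"

lemma N_SS: "N (Suc (Suc n)) a = a \<oplus> N (Suc n) a"
  by (induction n) auto

lemma N_add: "N (Suc m + Suc n) a = N (Suc m) a \<oplus> N (Suc n) a"
proof (induction n)
  case 0 then show ?case by simp
next
  case (Suc n)
  have "N (Suc m + Suc (Suc n)) a = N (Suc (Suc m + Suc n)) a" by simp
  also have "\<dots> = N (Suc m + Suc n) a \<oplus> a" by simp
  finally show ?case using Suc by simp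
qed

lemma N_add': "1 \<le> m \<Longrightarrow> 1 \<le> n \<Longrightarrow> N (m + n) a = N m a \<oplus> N n a"
  using N_add[of "m - 1" "n - 1" a] by simp

lemma N_mult: "N (Suc m * Suc n) a = N (Suc m) (N (Suc n) a)"
proof (induction m)
  case 0 then show ?case by simp
next
  case (Suc m)
  have eq: "Suc (Suc m) * Suc n = Suc n + Suc (m * Suc n + n)" by simp
  have eq2: "Suc (m * Suc n + n) = Suc m * Suc n" by simp
  have "N (Suc (Suc m) * Suc n) a = N (Suc n) a \<oplus> N (Suc m * Suc n) a"
    by (subst eq, subst N_add, subst eq2, rule refl)
  then show ?case by (simp only: N_SS[of m "N (Suc n) a"] Suc.IH)
qed

lemma N_mult': "1 \<le> m \<Longrightarrow> 1 \<le> n \<Longrightarrow> N (m * n) a = N m (N n a)"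
  using N_mult[of "m - 1" "n - 1" a] by simp

lemma N_idem: "e \<oplus> e = e \<Longrightarrow> N n e = e"
proof (induction n)
  case (Suc n) then show ?case by (cases n) auto
qed auto


lemma la: "a \<oplus> b = c \<Longrightarrow> a \<oplus> (b \<oplus> x) = c \<oplus> x"
  by (metis pa)

definition grp :: "'a \<Rightarrow> 'a \<Rightarrow> bool" where
  "grp e g \<longleftrightarrow> e \<oplus> e = e \<and> e \<oplus> g = g \<and> g \<oplus> e = g \<and>
     (\<exists>h. g \<oplus> h = e \<and> h \<oplus> g = e \<and> e \<oplus> h = h \<and> h \<oplus> e = h)"

lemma grpI: "e \<oplus> e = e \<Longrightarrow> e \<oplus> g = g \<Longrightarrow> g \<oplus> e = g \<Longrightarrow> g \<oplus> h = e \<Longrightarrow> h \<oplus> g = e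
  \<Longrightarrow> grp e g"
  unfolding grp_def
  apply (intro conjI, assumption+)
  apply (rule exI[of _ "e \<oplus> h \<oplus> e"])
  by (metis pa)

lemma grpD: assumes "grp e g"
  shows "e \<oplus> e = e" "e \<oplus> g = g" "g \<oplus> e = g"
  using assms unfolding grp_def by auto

lemma grp_inv: assumes "grp e g" obtains h where "grp e h" "g \<oplus> h = e" "h \<oplus> g = e"
proof -
  from assms obtain h where h: "g \<oplus> h = e" "h \<oplus> g = e" "e \<oplus> h = h" "h \<oplus> e = h"
    unfolding grp_def by auto
  have "grp e h" using h assms unfolding grp_def by blast
  then show ?thesis using that h by blast
qed

lemma grp_add: assumes "grp e g" "grp e k" shows "grp e (g \<oplus> k)"
proof -
  obtain hg where hg: "grp e hg" "g \<oplus> hg = e" "hg \<oplus> g = e" using grp_inv assms(1) by blast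
  obtain hk where hk: "grp e hk" "k \<oplus> hk = e" "hk \<oplus> k = e" using grp_inv assms(2) by blast
  note d = grpD[OF assms(1)] grpD[OF assms(2)] grpD[OF hg(1)] grpD[OF hk(1)]
  show ?thesis
  proof (rule grpI[of e _ "hk \<oplus> hg"])
    show "e \<oplus> e = e" using d by simp
    show "e \<oplus> g \<oplus> k = g \<oplus> k" using d by (metis pa)
    show "(g \<oplus> k) \<oplus> e = g \<oplus> k" using d by (metis pa)
    show "(g \<oplus> k) \<oplus> hk \<oplus> hg = e" using d hg hk by (metis pa)
    show "(hk \<oplus> hg) \<oplus> g \<oplus> k = e" using d hg hk by (metis pa)
  qed
qed

lemma grp_N: assumes "grp e g" shows "grp e (N (Suc n) g)"
proof (induction n)
  case 0 then show ?case using assms by simp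
next
  case (Suc n) then show ?case using grp_add[OF Suc assms] by simp
qed

lemma grp_self: "e \<oplus> e = e \<Longrightarrow> grp e e"
  by (rule grpI[of e e e]) auto

lemma grp_uniq: assumes "grp e g" "grp f g" shows "e = f"
proof -
  obtain h where h: "g \<oplus> h = e" "h \<oplus> g = e" using grp_inv assms(1) by blast
  obtain k where k: "g \<oplus> k = f" "k \<oplus> g = f" using grp_inv assms(2) by blast
  note d = grpD[OF assms(1)] grpD[OF assms(2)]
  have "e \<oplus> f = f" using d k by (metis pa)
  moreover have "e \<oplus> f = e" using d h by (metis pa)
  ultimately show ?thesis by simp
qed

lemma grp_idem_eq: assumes "grp e g" "g \<oplus> g = g" shows "g = e"
proof -
  obtain h where h: "g \<oplus> h = e" using grp_inv assms(1) by blast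
  then show ?thesis using assms grpD[OF assms(1)] by (metis pa)
qed

lemma grp_cancel: assumes "grp e g" "N (Suc n) g \<oplus> g = N (Suc n) g" shows "g = e"
proof -
  obtain w where w: "w \<oplus> N (Suc n) g = e" using grp_inv grp_N[OF assms(1)] by metis
  have "e \<oplus> g = e" using w assms(2) by (metis pa)
  then show ?thesis using grpD[OF assms(1)] by simp
qed

lemma idm_ml: "e \<oplus> e = e \<Longrightarrow> (e \<otimes> s) \<oplus> (e \<otimes> s) = e \<otimes> s"
  by (metis dr)
lemma idm_mr: "e \<oplus> e = e \<Longrightarrow> (s \<otimes> e) \<oplus> (s \<otimes> e) = s \<otimes> e"
  by (metis dl)

lemma grp_ml: assumes "grp e g" shows "grp (e \<otimes> c) (g \<otimes> c)"
proof -
  obtain h where h: "g \<oplus> h = e" "h \<oplus> g = e" using grp_inv assms by blast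
  note d = grpD[OF assms]
  show ?thesis
    apply (rule grpI[of _ _ "h \<otimes> c"])
    using d h by (metis dr)+
qed

lemma grp_mr: assumes "grp e g" shows "grp (c \<otimes> e) (c \<otimes> g)"
proof -
  obtain h where h: "g \<oplus> h = e" "h \<oplus> g = e" using grp_inv assms by blast
  note d = grpD[OF assms]
  show ?thesis
    apply (rule grpI[of _ _ "c \<otimes> h"])
    using d h by (metis dl)+
qed

lemma N_ml: "N (Suc n) (a \<otimes> b) = N (Suc n) a \<otimes> b"
  by (induction n) (auto simp: dr)
lemma N_mr: "N (Suc n) (a \<otimes> b) = a \<otimes> N (Suc n) b"
  by (induction n) (auto simp: dl)

lemma N_SS': "N (Suc (Suc n)) a = N (Suc n) a \<oplus> a" by simp

lemma N_left: "e \<oplus> a = a \<Longrightarrow> e \<oplus> N (Suc n) a = N (Suc n) a"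
  by (induction n) (auto simp: la)
lemma N_right: "a \<oplus> e = a \<Longrightarrow> N (Suc n) a \<oplus> e = N (Suc n) a"
proof (induction n)
  case (Suc n) then show ?case by (simp only: N_SS) (metis pa)
qed simp

end

locale qcr = sr +
  assumes qcr: "quasi_compl_regular pl ml"
begin

lemma Q0: "\<exists>n e. grp e (N (Suc n) a) \<and> N (Suc n) a \<otimes> e = e"
proof -
  obtain n where n: "n \<ge> 1" "compl_regular UNIV pl ml (N n a)"
    using qcr unfolding quasi_compl_regular_def by blast
  define b where "b = N n a"
  obtain x where x: "b = b \<oplus> x \<oplus> b" "b \<oplus> x = x \<oplus> b" "b \<otimes> (b \<oplus> x) = b \<oplus> x"
    using n(2) unfolding compl_regular_def b_def by auto
  have g: "grp (b \<oplus> x) b"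
    apply (rule grpI[of _ _ x])
    using x by (metis pa)+
  obtain m where "n = Suc m" using n(1) by (cases n) auto
  then show ?thesis using g x(3) b_def by blast
qed

definition z :: "'a \<Rightarrow> 'a" where "z a = (SOME e. \<exists>n. grp e (N (Suc n) a))"

lemma z_ex: "\<exists>n. grp (z a) (N (Suc n) a)"
proof -
  have "\<exists>e n. grp e (N (Suc n) a)" using Q0 by blast
  from someI_ex[OF this] show ?thesis unfolding z_def .
qed

lemma z_eq: assumes "grp e (N (Suc n) a)" shows "z a = e"
proof -
  obtain m where m: "grp (z a) (N (Suc m) a)" using z_ex by blast
  have 1: "grp (z a) (N (Suc n * Suc m) a)" using grp_N[OF m] N_mult by metis
  have 2: "grp e (N (Suc m * Suc n) a)" using grp_N[OF assms] N_mult by metis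
  show ?thesis using grp_uniq 1 2 by (metis mult.commute)
qed

lemma z_grp: "grp e g \<Longrightarrow> z g = e"
  using z_eq[of e 0 g] by simp

lemma z_idm: "z a \<oplus> z a = z a"
  using z_ex grpD by blast

lemma z_of_idm: "e \<oplus> e = e \<Longrightarrow> z e = e"
  using z_grp grp_self by blast

lemma z_z[simp]: "z (z a) = z a"
  using z_of_idm z_idm by blast

lemma z_N: "z (N (Suc n) a) = z a"
proof -
  obtain m where m: "grp (z a) (N (Suc m) a)" using z_ex by blast
  have "grp (z a) (N (Suc m) (N (Suc n) a))"
    using grp_N[OF m, of n] N_mult by (metis mult.commute)
  then show ?thesis using z_eq by blast
qed

lemma z_2: "z (a \<oplus> a) = z a"
  using z_N[of 1 a] by simp

lemma F2: "a \<otimes> z a = z a"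
proof -
  obtain n e where ne: "grp e (N (Suc n) a)" "N (Suc n) a \<otimes> e = e" using Q0 by blast
  have ze: "z a = e" using z_eq ne(1) by blast
  have i: "(a \<otimes> e) \<oplus> (a \<otimes> e) = a \<otimes> e" using idm_mr grpD(1)[OF ne(1)] by blast
  have "N (Suc n) (a \<otimes> e) = e" using ne(2) N_ml by metis
  moreover have "N (Suc n) (a \<otimes> e) = a \<otimes> e" using N_idem i by blast
  ultimately show ?thesis using ze by simp
qed

lemma F3: assumes "e \<oplus> e = e" shows "a \<otimes> e = z a \<otimes> e" "e \<otimes> a = e \<otimes> z a"
proof -
  obtain n where n: "grp (z a) (N (Suc n) a)" using z_ex by blast
  have "grp (z a \<otimes> e) (N (Suc n) a \<otimes> e)" using grp_ml[OF n] .
  moreover have "N (Suc n) a \<otimes> e = a \<otimes> e"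
    using N_ml[symmetric] N_idem[OF idm_mr[OF assms]] by simp
  ultimately show "a \<otimes> e = z a \<otimes> e" using grp_idem_eq idm_mr[OF assms] by metis
  have "grp (e \<otimes> z a) (e \<otimes> N (Suc n) a)" using grp_mr[OF n] .
  moreover have "e \<otimes> N (Suc n) a = e \<otimes> a"
    using N_mr[symmetric] N_idem[OF idm_ml[OF assms]] by simp
  ultimately show "e \<otimes> a = e \<otimes> z a" using grp_idem_eq idm_ml[OF assms] by metis
qed

lemma zz_ml: "z a \<otimes> z a = z a"
  using F2[of "z a"] by simp

lemma F2': "z a \<otimes> a = z a"
  using F3(2)[of "z a" a, OF z_idm] zz_ml by simp

lemma F4: "z (a \<otimes> b) = z a \<otimes> z b"
proof -
  obtain n where n: "grp (z a) (N (Suc n) a)" using z_ex by blast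
  have "grp (z a \<otimes> b) (N (Suc n) (a \<otimes> b))" using grp_ml[OF n] N_ml by metis
  then have "z (a \<otimes> b) = z a \<otimes> b" using z_eq by blast
  then show ?thesis using F3(2)[OF z_idm] by metis
qed

lemma F5: "z (a \<oplus> b) = z (z a \<oplus> z b)"
proof -
  define f where "f = z (a \<oplus> b)"
  define p where "p = z (z a \<oplus> z b)"
  have fi: "f \<oplus> f = f" "p \<oplus> p = p" unfolding f_def p_def using z_idm by auto
  have "f = f \<otimes> (a \<oplus> b)" using F2' f_def by metis
  also have "\<dots> = f \<otimes> z a \<oplus> f \<otimes> z b" using dl F3(2)[OF fi(1)] by metis
  also have "\<dots> = f \<otimes> (z a \<oplus> z b)" using dl by metis
  also have "\<dots> = f \<otimes> p" using F3(2)[OF fi(1)] p_def by metis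
  finally have 1: "f = f \<otimes> p" .
  have "p = (z a \<oplus> z b) \<otimes> p" using F2 p_def by metis
  also have "\<dots> = a \<otimes> p \<oplus> b \<otimes> p" using dr F3(1)[OF fi(2)] by metis
  also have "\<dots> = (a \<oplus> b) \<otimes> p" using dr by metis
  also have "\<dots> = f \<otimes> p" using F3(1)[OF fi(2)] f_def by metis
  finally have "p = f \<otimes> p" .
  with 1 show ?thesis unfolding f_def p_def by simp
qed

lemma z_SS: "\<exists>k. grp (z a) (N (Suc (Suc k)) a)"
proof -
  obtain n where n: "grp (z a) (N (Suc n) a)" using z_ex by blast
  have "grp (z a) (N (Suc 1) (N (Suc n) a))" using grp_N[OF n] .
  then have "grp (z a) (N (Suc 1 * Suc n) a)" using N_mult by metis
  moreover have "Suc 1 * Suc n = Suc (Suc (n + n))" by simp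
  ultimately show ?thesis by (metis)
qed

lemma F7: assumes e: "e \<oplus> e = e" "e \<oplus> t = t" "t \<oplus> e = t" "z t = e" shows "grp e t"
proof -
  obtain k where k: "grp e (N (Suc (Suc k)) t)" using z_SS assms(4) by metis
  obtain w where w: "grp e w" "N (Suc (Suc k)) t \<oplus> w = e" "w \<oplus> N (Suc (Suc k)) t = e"
    using grp_inv k by blast
  define r where "r = N (Suc k) t \<oplus> w"
  define l where "l = w \<oplus> N (Suc k) t"
  have tr: "t \<oplus> r = e" using w(2) unfolding r_def N_SS by simp
  have lt: "l \<oplus> t = e" using w(3) unfolding l_def N_SS' by simp
  have er: "e \<oplus> r = r" unfolding r_def using N_left[OF e(2)] by (simp add: pa[symmetric])
  have le: "l \<oplus> e = l" unfolding l_def using N_right[OF e(3)] by simp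
  have "l = l \<oplus> (t \<oplus> r)" using le tr by simp
  also have "\<dots> = e \<oplus> r" using lt by (simp add: pa[symmetric])
  finally have "l = r" using er by simp
  show ?thesis using grpI[of e t r] e tr lt \<open>l = r\<close> by blast
qed

end

lemma band_trans:
  fixes m :: "'a \<Rightarrow> 'a \<Rightarrow> 'a"
  assumes A: "\<And>x y z. m (m x y) z = m x (m y z)" and I: "\<And>x. x \<in> B \<Longrightarrow> m x x = x"
  and C: "\<And>x y. m x y \<in> B" and "e \<in> B" "f \<in> B" "g \<in> B"
  and "m (m e f) e = e" "m (m f g) f = f"
  shows "m (m e g) e = e"
  by (metis A assms(7) assms(8) C I)

lemma band_cong:
  fixes m :: "'a \<Rightarrow> 'a \<Rightarrow> 'a"
  assumes A: "\<And>x y z. m (m x y) z = m x (m y z)" and I: "\<And>x. x \<in> B \<Longrightarrow> m x x = x"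
  and C: "\<And>x y. m x y \<in> B" and "e \<in> B" "f \<in> B" "g \<in> B"
  and "m (m e f) e = e" "m (m f e) f = f"
  shows "m (m (m e g) (m f g)) (m e g) = m e g"
  by (metis A C I assms(7))

lemma band_cong2:
  fixes m :: "'a \<Rightarrow> 'a \<Rightarrow> 'a"
  assumes A: "\<And>x y z. m (m x y) z = m x (m y z)" and I: "\<And>x. x \<in> B \<Longrightarrow> m x x = x"
  and C: "\<And>x y. m x y \<in> B" and "e \<in> B" "f \<in> B" "g \<in> B"
  and "m (m e f) e = e" "m (m f e) f = f"
  shows "m (m (m g e) (m g f)) (m g e) = m g e"
  by (metis A C I assms(7,8))

lemma band_comm:
  fixes m :: "'a \<Rightarrow> 'a \<Rightarrow> 'a"
  assumes A: "\<And>x y z. m (m x y) z = m x (m y z)" and I: "\<And>x. x \<in> B \<Longrightarrow> m x x = x"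
  and C: "\<And>x y. m x y \<in> B" and "e \<in> B" "f \<in> B"
  shows "m (m (m e f) (m f e)) (m e f) = m e f"
  by (metis A C I assms(4,5))

context qcr begin

declare nsm.simps(3)[simp del]

lemma N_first: "\<exists>R. N (Suc (Suc k)) (a \<oplus> s) = a \<oplus> R"
  by (simp only: N_SS) (metis pa)
lemma N_last: "\<exists>R. N (Suc (Suc k)) (s \<oplus> a) = R \<oplus> a"
  by (simp only: N_SS') (metis pa)

lemma P2: "z a \<oplus> z (a \<oplus> s) = z (a \<oplus> s)"
proof -
  define w where "w = a \<oplus> s"
  define f where "f = z w"
  have fi: "f \<oplus> f = f" unfolding f_def using z_idm by blast
  obtain k where k: "grp f (N (Suc (Suc k)) w)" using z_SS f_def by blast
  obtain h where h: "N (Suc (Suc k)) w \<oplus> h = f" using grp_inv k by blast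
  obtain R where R: "N (Suc (Suc k)) w = a \<oplus> R" using N_first w_def by blast
  have "f = w \<otimes> f" using F2 f_def by metis
  also have "\<dots> = a \<otimes> f \<oplus> s \<otimes> f" unfolding w_def by (rule dr)
  also have "\<dots> = z a \<otimes> f \<oplus> s \<otimes> f" using F3(1)[OF fi] by metis
  finally have 1: "f = z a \<otimes> f \<oplus> s \<otimes> f" .
  have "f = a \<oplus> R \<oplus> h" using h R by (metis pa)
  then have "z a \<otimes> f = z a \<otimes> (a \<oplus> R \<oplus> h)" by simp
  also have "\<dots> = z a \<oplus> z a \<otimes> (R \<oplus> h)" using dl F2' by metis
  finally have eq: "f = z a \<oplus> (z a \<otimes> (R \<oplus> h) \<oplus> s \<otimes> f)" using 1 by simp
  have "z a \<oplus> f = (z a \<oplus> z a) \<oplus> (z a \<otimes> (R \<oplus> h) \<oplus> s \<otimes> f)" by (subst eq) simp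
  then have "z a \<oplus> f = f" using z_idm eq by simp
  then show ?thesis unfolding f_def w_def .
qed

lemma P2': "z (s \<oplus> a) \<oplus> z a = z (s \<oplus> a)"
proof -
  define w where "w = s \<oplus> a"
  define f where "f = z w"
  have fi: "f \<oplus> f = f" unfolding f_def using z_idm by blast
  obtain k where k: "grp f (N (Suc (Suc k)) w)" using z_SS f_def by blast
  obtain h where h: "h \<oplus> N (Suc (Suc k)) w = f" using grp_inv k by blast
  obtain R where R: "N (Suc (Suc k)) w = R \<oplus> a" using N_last w_def by blast
  have "f = f \<otimes> w" using F2' f_def by metis
  also have "\<dots> = f \<otimes> s \<oplus> f \<otimes> a" unfolding w_def by (rule dl)
  also have "\<dots> = f \<otimes> s \<oplus> f \<otimes> z a" using F3(2)[OF fi] by metis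
  finally have 1: "f = f \<otimes> s \<oplus> f \<otimes> z a" .
  have "f = h \<oplus> R \<oplus> a" using h R by (metis pa)
  then have "f \<otimes> z a = (h \<oplus> R \<oplus> a) \<otimes> z a" by simp
  also have "\<dots> = (h \<oplus> R) \<otimes> z a \<oplus> z a"
    using dr[of "h \<oplus> R" a "z a"] F2[of a] by simp
  finally have eq: "f = (f \<otimes> s \<oplus> (h \<oplus> R) \<otimes> z a) \<oplus> z a" using 1 by simp
  have "f \<oplus> z a = (f \<otimes> s \<oplus> (h \<oplus> R) \<otimes> z a) \<oplus> (z a \<oplus> z a)" by (subst eq) simp
  then have "f \<oplus> z a = f" using z_idm eq by simp
  then show ?thesis unfolding f_def w_def .
qed

lemma Reg: assumes "a \<oplus> x \<oplus> a = a" shows "grp (z a) a"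
proof -
  have fi: "(a \<oplus> x) \<oplus> (a \<oplus> x) = a \<oplus> x" using assms by (metis pa)
  have ei: "(x \<oplus> a) \<oplus> (x \<oplus> a) = x \<oplus> a" using assms by (metis pa)
  have f: "z (a \<oplus> x) = a \<oplus> x" using z_of_idm fi by blast
  have e: "z (x \<oplus> a) = x \<oplus> a" using z_of_idm ei by blast
  have 1: "z a \<oplus> (a \<oplus> x) = a \<oplus> x" using P2[of a x] f by simp
  have 2: "(x \<oplus> a) \<oplus> z a = x \<oplus> a" using P2'[of x a] e by simp
  have "z a \<oplus> a = z a \<oplus> (a \<oplus> x \<oplus> a)" using assms by simp
  also have "\<dots> = a \<oplus> x \<oplus> a" using la[OF 1, of a] by simp
  also have "\<dots> = a" using assms .
  finally have "z a \<oplus> a = a" .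
  moreover have "a \<oplus> z a = a"
  proof -
    have "a \<oplus> z a = a \<oplus> (x \<oplus> a \<oplus> z a)" using assms by (metis pa)
    also have "\<dots> = a \<oplus> x \<oplus> a" using 2 by simp
    finally show ?thesis using assms by simp
  qed
  ultimately show ?thesis using F7 z_idm by metis
qed

definition st :: "'a \<Rightarrow> 'a \<Rightarrow> 'a" where "st a b = z (a \<oplus> b)"

lemma zpl1[simp]: "z (z a \<oplus> b) = z (a \<oplus> b)" by (metis F5 z_z)
lemma zpl2[simp]: "z (a \<oplus> z b) = z (a \<oplus> b)" by (metis F5 z_z)

lemma st_zl[simp]: "st (z a) b = st a b" unfolding st_def by (metis F5 z_z)
lemma st_zr[simp]: "st a (z b) = st a b" unfolding st_def by (metis F5 z_z)
lemma z_st[simp]: "z (st a b) = st a b" unfolding st_def by simp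
lemma st_pl1: "st (a \<oplus> b) c = st (st a b) c" unfolding st_def by (metis F5 z_z)
lemma st_pl2: "st c (a \<oplus> b) = st c (st a b)" unfolding st_def by (metis F5 z_z)
lemma st_assoc: "st (st a b) c = st a (st b c)"
  by (simp add: st_def)
lemma st_idem: "st a a = z a" unfolding st_def using z_2 .
lemma st_range: "st a b \<in> range z" by (metis rangeI z_st)
lemma st_B: "x \<in> range z \<Longrightarrow> st x x = x" using st_idem by auto

lemmas band_facts = st_assoc st_B st_range

definition rho :: "'a \<Rightarrow> 'a \<Rightarrow> bool" where
  "rho a b \<longleftrightarrow> st (st a b) a = z a \<and> st (st b a) b = z b"

lemma rho_refl: "rho a a" unfolding rho_def by (simp add: st_idem)
lemma rho_sym: "rho a b \<Longrightarrow> rho b a" unfolding rho_def by simp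

lemma stz: "st (st a b) c = st (st (z a) (z b)) (z c)" by simp

lemma rho_trans: assumes "rho a b" "rho b c" shows "rho a c"
proof -
  have r: "z a \<in> range z" "z b \<in> range z" "z c \<in> range z" by auto
  have h1: "st (st (z a) (z b)) (z a) = z a" "st (st (z b) (z a)) (z b) = z b"
    using assms(1) unfolding rho_def by simp_all
  have h2: "st (st (z b) (z c)) (z b) = z b" "st (st (z c) (z b)) (z c) = z c"
    using assms(2) unfolding rho_def by simp_all
  have "st (st (z a) (z c)) (z a) = z a"
    using band_trans[of st "range z", OF st_assoc st_B st_range r h1(1) h2(1)] by blast
  moreover have "st (st (z c) (z a)) (z c) = z c"
    using band_trans[of st "range z", OF st_assoc st_B st_range r(3) r(2) r(1) h2(2) h1(2)] by blast
  ultimately show ?thesis unfolding rho_def by simp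
qed

lemma rho_z: "z a = z b \<Longrightarrow> rho a b"
  unfolding rho_def by (metis st_zl st_zr st_idem z_z)

lemma rho_add_r: assumes "rho a b" shows "rho (a \<oplus> c) (b \<oplus> c)"
proof -
  have r: "z a \<in> range z" "z b \<in> range z" "z c \<in> range z" by auto
  have h1: "st (st (z a) (z b)) (z a) = z a" "st (st (z b) (z a)) (z b) = z b"
    using assms(1) unfolding rho_def by simp_all
  have 1: "st (st (st (z a) (z c)) (st (z b) (z c))) (st (z a) (z c)) = st (z a) (z c)"
    using band_cong[of st "range z", OF st_assoc st_B st_range r h1] .
  have 2: "st (st (st (z b) (z c)) (st (z a) (z c))) (st (z b) (z c)) = st (z b) (z c)"
    using band_cong[of st "range z", OF st_assoc st_B st_range r(2) r(1) r(3) h1(2) h1(1)] .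
  show ?thesis unfolding rho_def using 1 2
    by (simp add: st_pl1 st_pl2 st_def[symmetric])
qed

lemma rho_add_l: assumes "rho a b" shows "rho (c \<oplus> a) (c \<oplus> b)"
proof -
  have r: "z a \<in> range z" "z b \<in> range z" "z c \<in> range z" by auto
  have h1: "st (st (z a) (z b)) (z a) = z a" "st (st (z b) (z a)) (z b) = z b"
    using assms(1) unfolding rho_def by simp_all
  have 1: "st (st (st (z c) (z a)) (st (z c) (z b))) (st (z c) (z a)) = st (z c) (z a)"
    using band_cong2[of st "range z", OF st_assoc st_B st_range r h1] .
  have 2: "st (st (st (z c) (z b)) (st (z c) (z a))) (st (z c) (z b)) = st (z c) (z b)"
    using band_cong2[of st "range z", OF st_assoc st_B st_range r(2) r(1) r(3) h1(2) h1(1)] .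
  show ?thesis unfolding rho_def using 1 2
    by (simp add: st_pl1 st_pl2 st_def[symmetric])
qed

end

context qcr begin

lemma zpl3[simp]: "z (a \<oplus> b \<oplus> z c) = z (a \<oplus> b \<oplus> c)"
  by (metis zpl2)
lemma zpl4[simp]: "z (a \<oplus> z b \<oplus> c) = z (a \<oplus> b \<oplus> c)"
  by (metis zpl1 zpl2)

lemma rho_add: "rho a b \<Longrightarrow> rho c d \<Longrightarrow> rho (a \<oplus> c) (b \<oplus> d)"
  using rho_trans rho_add_r rho_add_l by blast

lemma st3: "st (st x y) w = z (x \<oplus> y \<oplus> w)" unfolding st_def by simp

lemma rhoD: "rho a b \<Longrightarrow> z (a \<oplus> b \<oplus> a) = z a"
  unfolding rho_def st3 by simp

lemma rho_ml_r: assumes "rho a b" shows "rho (a \<otimes> c) (b \<otimes> c)"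
proof -
  have 1: "z (a \<oplus> b \<oplus> a) = z a" "z (b \<oplus> a \<oplus> b) = z b"
    using assms rhoD rho_sym by blast+
  have "z (a \<otimes> c \<oplus> b \<otimes> c \<oplus> a \<otimes> c) = z ((a \<oplus> b \<oplus> a) \<otimes> c)" by (simp add: dr)
  also have "\<dots> = z (a \<otimes> c)" using 1 F4 by simp
  finally have 2: "z (a \<otimes> c \<oplus> b \<otimes> c \<oplus> a \<otimes> c) = z (a \<otimes> c)" .
  have "z (b \<otimes> c \<oplus> a \<otimes> c \<oplus> b \<otimes> c) = z ((b \<oplus> a \<oplus> b) \<otimes> c)" by (simp add: dr)
  also have "\<dots> = z (b \<otimes> c)" using 1 F4 by simp
  finally show ?thesis using 2 unfolding rho_def st3 by simp
qed

lemma rho_ml_l: assumes "rho a b" shows "rho (c \<otimes> a) (c \<otimes> b)"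
proof -
  have 1: "z (a \<oplus> b \<oplus> a) = z a" "z (b \<oplus> a \<oplus> b) = z b"
    using assms rhoD rho_sym by blast+
  have "z (c \<otimes> a \<oplus> c \<otimes> b \<oplus> c \<otimes> a) = z (c \<otimes> (a \<oplus> b \<oplus> a))" by (simp add: dl)
  also have "\<dots> = z (c \<otimes> a)" using 1 F4 by simp
  finally have 2: "z (c \<otimes> a \<oplus> c \<otimes> b \<oplus> c \<otimes> a) = z (c \<otimes> a)" .
  have "z (c \<otimes> b \<oplus> c \<otimes> a \<oplus> c \<otimes> b) = z (c \<otimes> (b \<oplus> a \<oplus> b))" by (simp add: dl)
  also have "\<dots> = z (c \<otimes> b)" using 1 F4 by simp
  finally show ?thesis using 2 unfolding rho_def st3 by simp
qed

lemma rho_ml: "rho a b \<Longrightarrow> rho c d \<Longrightarrow> rho (a \<otimes> c) (b \<otimes> d)"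
  using rho_trans rho_ml_r rho_ml_l by blast

lemma rho_sq: "rho (a \<otimes> a) a"
  using rho_z F4 zz_ml by metis

lemma rho_2: "rho (a \<oplus> a) a"
  using rho_z z_2 by blast

lemma rho_comm: "rho (a \<oplus> b) (b \<oplus> a)"
proof -
  have r: "z a \<in> range z" "z b \<in> range z" by auto
  have 1: "st (st (st (z a) (z b)) (st (z b) (z a))) (st (z a) (z b)) = st (z a) (z b)"
    using band_comm[of st "range z", OF st_assoc st_B st_range r] .
  have 2: "st (st (st (z b) (z a)) (st (z a) (z b))) (st (z b) (z a)) = st (z b) (z a)"
    using band_comm[of st "range z", OF st_assoc st_B st_range r(2) r(1)] .
  show ?thesis unfolding rho_def using 1 2
    by (simp add: st_pl1 st_pl2 st_def[symmetric])
qed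

lemma rho_cong: "congruence pl ml rho"
  unfolding congruence_def
proof (intro conjI allI impI)
  show "equivp rho"
    by (rule equivpI) (auto simp: reflp_def symp_def transp_def intro: rho_refl rho_sym rho_trans)
qed (auto intro: rho_add rho_ml)

lemma rho_blat: "quotient_b_lattice pl ml rho"
  unfolding quotient_b_lattice_def using rho_sq rho_2 rho_comm by blast

end

context qcr begin

definition Cls where "Cls a = {x. rho a x}"
definition Ker where "Ker a = {x. rho a x \<and> grp (z x) x}"

lemma Cls_add: "x \<in> Cls a \<Longrightarrow> y \<in> Cls a \<Longrightarrow> x \<oplus> y \<in> Cls a"
  unfolding Cls_def mem_Collect_eq
proof -
  assume "rho a x" "rho a y"
  then have "rho (a \<oplus> a) (x \<oplus> y)" by (rule rho_add)
  then show "rho a (x \<oplus> y)" using rho_trans[OF rho_sym[OF rho_2]] by blast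
qed
lemma Cls_ml: "x \<in> Cls a \<Longrightarrow> y \<in> Cls a \<Longrightarrow> x \<otimes> y \<in> Cls a"
  unfolding Cls_def mem_Collect_eq
proof -
  assume "rho a x" "rho a y"
  then have "rho (a \<otimes> a) (x \<otimes> y)" by (rule rho_ml)
  then show "rho a (x \<otimes> y)" using rho_trans[OF rho_sym[OF rho_sq]] by blast
qed

lemma Ker_Cls: "Ker a \<subseteq> Cls a" unfolding Ker_def Cls_def by auto

lemma bi_add_r: assumes k: "k \<in> Ker a" and x: "x \<in> Cls a" shows "k \<oplus> x \<in> Ker a"
proof -
  define e where "e = z k"
  have gk: "grp e k" using k unfolding Ker_def e_def by auto
  note dk = grpD[OF gk]
  have rkx: "rho k x" using k x unfolding Ker_def Cls_def using rho_sym rho_trans by blast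
  define t where "t = e \<oplus> x \<oplus> e"
  have zt: "z t = e" unfolding t_def e_def using rhoD[OF rkx] by simp
  have et: "e \<oplus> t = t" unfolding t_def using la[OF dk(1)] by simp
  have te: "t \<oplus> e = t" unfolding t_def using dk(1) by simp
  have gt: "grp e t" using F7[OF dk(1) et te zt] .
  define y where "y = k \<oplus> x"
  have "y \<oplus> e = k \<oplus> t" unfolding y_def t_def using la[OF dk(3)] by simp
  then have gye: "grp e (y \<oplus> e)" using grp_add[OF gk gt] by simp
  obtain r where r: "grp e r" "(y \<oplus> e) \<oplus> r = e" "r \<oplus> (y \<oplus> e) = e" using grp_inv gye by blast
  note dr' = grpD[OF r(1)]
  have "y \<oplus> r = y \<oplus> (e \<oplus> r)" using dr' by simp
  also have "\<dots> = e" using r(2) by simp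
  finally have yr: "y \<oplus> r = e" .
  have ey: "e \<oplus> y = y" unfolding y_def using la[OF dk(2)] by simp
  define d where "d = r \<oplus> y"
  have dd: "d \<oplus> d = d" unfolding d_def by (simp add: la[OF yr] ey)
  have "z d = z (z r \<oplus> y)" unfolding d_def by simp
  then have "z d = z (e \<oplus> y)" using z_grp[OF r(1)] by simp
  then have zd: "z d = z y" using ey by simp
  have zy: "z y = d" using zd z_of_idm dd by simp
  have yf: "y \<oplus> z y = y" unfolding zy d_def by (simp add: la[OF yr] ey)
  have fe: "z y \<oplus> e = e" unfolding zy d_def using r(3) by simp
  have fy: "z y \<oplus> y = y" using la[OF fe, of y] ey by simp
  have "grp (z y) y" using F7 z_idm yf fy by blast
  moreover have "y \<in> Cls a" unfolding y_def using Cls_add x k Ker_Cls by blast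
  ultimately show ?thesis unfolding y_def Ker_def Cls_def by simp
qed

lemma bi_add_l: assumes k: "k \<in> Ker a" and x: "x \<in> Cls a" shows "x \<oplus> k \<in> Ker a"
proof -
  define e where "e = z k"
  have gk: "grp e k" using k unfolding Ker_def e_def by auto
  note dk = grpD[OF gk]
  have rkx: "rho k x" using k x unfolding Ker_def Cls_def using rho_sym rho_trans by blast
  define t where "t = e \<oplus> x \<oplus> e"
  have zt: "z t = e" unfolding t_def e_def using rhoD[OF rkx] by simp
  have et: "e \<oplus> t = t" unfolding t_def using la[OF dk(1)] by simp
  have te: "t \<oplus> e = t" unfolding t_def using dk(1) by simp
  have gt: "grp e t" using F7[OF dk(1) et te zt] .
  define y where "y = x \<oplus> k"
  have "e \<oplus> y = t \<oplus> k" unfolding y_def t_def using la[OF dk(1)] dk(2) by simp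
  then have gye: "grp e (e \<oplus> y)" using grp_add[OF gt gk] by simp
  obtain r where r: "grp e r" "(e \<oplus> y) \<oplus> r = e" "r \<oplus> (e \<oplus> y) = e" using grp_inv gye by blast
  note dr' = grpD[OF r(1)]
  have "r \<oplus> y = (r \<oplus> e) \<oplus> y" using dr' by simp
  also have "\<dots> = e" using r(3) by simp
  finally have ry: "r \<oplus> y = e" .
  have ye: "y \<oplus> e = y" unfolding y_def using dk by simp
  define d where "d = y \<oplus> r"
  have dd: "d \<oplus> d = d" unfolding d_def by (simp add: la[OF ry] ye dr')
  have "z d = z (y \<oplus> z r)" unfolding d_def by simp
  then have "z d = z (y \<oplus> e)" using z_grp[OF r(1)] by simp
  then have zd: "z d = z y" using ye by simp
  have zy: "z y = d" using zd z_of_idm dd by simp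
  have fy: "z y \<oplus> y = y" unfolding zy d_def by (simp add: ry ye)
  have ef: "e \<oplus> z y = e" unfolding zy d_def using r(2) by simp
  have yf: "y \<oplus> z y = y" using la[OF ye, of "z y"] ef ye by simp
  have "grp (z y) y" using F7 z_idm yf fy by blast
  moreover have "y \<in> Cls a" unfolding y_def using Cls_add x k Ker_Cls by blast
  ultimately show ?thesis unfolding y_def Ker_def Cls_def by simp
qed

lemma bi_ml_r: assumes k: "k \<in> Ker a" and x: "x \<in> Cls a" shows "k \<otimes> x \<in> Ker a"
proof -
  have "grp (z k \<otimes> x) (k \<otimes> x)" using grp_ml k unfolding Ker_def by auto
  then have "grp (z (k \<otimes> x)) (k \<otimes> x)" using z_grp by metis
  moreover have "k \<otimes> x \<in> Cls a" using Cls_ml x k Ker_Cls by blast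
  ultimately show ?thesis unfolding Ker_def Cls_def by simp
qed

lemma bi_ml_l: assumes k: "k \<in> Ker a" and x: "x \<in> Cls a" shows "x \<otimes> k \<in> Ker a"
proof -
  have "grp (x \<otimes> z k) (x \<otimes> k)" using grp_mr k unfolding Ker_def by auto
  then have "grp (z (x \<otimes> k)) (x \<otimes> k)" using z_grp by metis
  moreover have "x \<otimes> k \<in> Cls a" using Cls_ml x k Ker_Cls by blast
  ultimately show ?thesis unfolding Ker_def Cls_def by simp
qed

end

context qcr begin

lemma Cls_closed: "closed_sub pl ml (Cls a)"
  unfolding closed_sub_def using Cls_add Cls_ml by blast

lemma Ker_closed: "closed_sub pl ml (Ker a)"
  unfolding closed_sub_def using bi_add_r bi_ml_r Ker_Cls by blast

lemma Ker_nil: assumes "x \<in> Cls a" shows "\<exists>n\<ge>1. N n x \<in> Ker a"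
proof -
  obtain m where m: "grp (z x) (N (Suc m) x)" using z_ex by blast
  have zN: "z (N (Suc m) x) = z x" using z_N .
  have "rho x (N (Suc m) x)" using rho_z zN by metis
  then have "rho a (N (Suc m) x)" using assms unfolding Cls_def using rho_trans by blast
  then have "N (Suc m) x \<in> Ker a" unfolding Ker_def using m zN by simp
  then show ?thesis by (intro exI[of _ "Suc m"]) simp
qed

lemma nil_ext: "nil_extension pl ml (Cls a) (Ker a)"
  unfolding nil_extension_def
proof (intro conjI ballI)
  show "closed_sub pl ml (Cls a)" by (rule Cls_closed)
  show "Ker a \<subseteq> Cls a" by (rule Ker_Cls)
  show "closed_sub pl ml (Ker a)" by (rule Ker_closed)
  fix k x assume "k \<in> Ker a" "x \<in> Cls a"
  then show "k \<oplus> x \<in> Ker a" "x \<oplus> k \<in> Ker a" "k \<otimes> x \<in> Ker a" "x \<otimes> k \<in> Ker a"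
    by (rule bi_add_r, rule bi_add_l, rule bi_ml_r, rule bi_ml_l)
next
  fix x assume "x \<in> Cls a" then show "\<exists>n\<ge>1. N n x \<in> Ker a" by (rule Ker_nil)
qed

lemma Ker_cr: assumes k: "k \<in> Ker a" shows "compl_regular (Ker a) pl ml k"
proof -
  have gk: "grp (z k) k" using k unfolding Ker_def by auto
  obtain h where h: "grp (z k) h" "k \<oplus> h = z k" "h \<oplus> k = z k" using grp_inv gk by blast
  have zh: "z h = z k" using z_grp h(1) .
  have "rho k h" using rho_z zh by metis
  then have "rho a h" using k rho_trans unfolding Ker_def by blast
  then have hK: "h \<in> Ker a" using h(1) zh unfolding Ker_def by simp
  have "k = k \<oplus> h \<oplus> k" using la[OF h(2), of k] grpD(2)[OF gk] by simp
  moreover have "k \<otimes> (k \<oplus> h) = k \<oplus> h" using h(2) F2 by simp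
  ultimately show ?thesis unfolding compl_regular_def using hK h(2,3) grpD(2)[OF gk]
    by (intro bexI[of _ h]) auto
qed

lemma tid3: assumes "s \<in> K" "t \<in> K" shows "s \<oplus> k \<oplus> t \<in> tideal K pl k"
proof -
  have "pl (pl s k) t \<in> {pl (pl s k) t | s t. s \<in> K \<and> t \<in> K}" using assms by blast
  then show ?thesis unfolding tideal_def by (simp only: pa) blast
qed

lemma tideal_sub:
  assumes cl: "\<And>x y. x \<in> K \<Longrightarrow> y \<in> K \<Longrightarrow> x \<oplus> y \<in> K"
    and st: "s \<in> K" "t \<in> K" and k1: "k1 = s \<oplus> k2 \<oplus> t"
  shows "tideal K pl k1 \<subseteq> tideal K pl k2"
proof
  fix y assume "y \<in> tideal K pl k1"
  then consider "y = k1" | u where "u \<in> K" "y = u \<oplus> k1" | u where "u \<in> K" "y = k1 \<oplus> u"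
    | u v where "u \<in> K" "v \<in> K" "y = u \<oplus> k1 \<oplus> v"
    unfolding tideal_def by auto
  then show "y \<in> tideal K pl k2"
  proof cases
    case 1 then show ?thesis using tid3[OF st] k1 by simp
  next
    case 2
    then have "y = (u \<oplus> s) \<oplus> k2 \<oplus> t" using k1 by simp
    then show ?thesis using tid3[OF cl[OF 2(1) st(1)] st(2)] by simp
  next
    case 3
    then have "y = s \<oplus> k2 \<oplus> (t \<oplus> u)" using k1 by simp
    then show ?thesis using tid3[OF st(1) cl[OF st(2) 3(1)]] by simp
  next
    case 4
    then have "y = (u \<oplus> s) \<oplus> k2 \<oplus> (t \<oplus> v)" using k1 by simp
    then show ?thesis using tid3[OF cl[OF 4(1) st(1)] cl[OF st(2) 4(2)]] by simp
  qed
qed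

lemma Ker_J1: assumes k1: "k1 \<in> Ker a" and k2: "k2 \<in> Ker a"
  shows "\<exists>W\<in>Ker a. k1 = k1 \<oplus> k2 \<oplus> W"
proof -
  define e1 where "e1 = z k1"
  define e2 where "e2 = z k2"
  have g1: "grp e1 k1" using k1 unfolding Ker_def e1_def by auto
  have g2: "grp e2 k2" using k2 unfolding Ker_def e2_def by auto
  have r12: "rho k1 k2" using k1 k2 unfolding Ker_def using rho_sym rho_trans by blast
  define g where "g = e1 \<oplus> e2 \<oplus> e1"
  have zg: "z g = e1" unfolding g_def e1_def e2_def using rhoD[OF r12] by simp
  note d1 = grpD[OF g1]
  have "e1 \<oplus> g = g" unfolding g_def using la[OF d1(1)] by simp
  moreover have "g \<oplus> e1 = g" unfolding g_def using d1(1) by simp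
  ultimately have gg: "grp e1 g" using F7 d1(1) zg by blast
  obtain g' where g': "grp e1 g'" "g \<oplus> g' = e1" using grp_inv gg by blast
  obtain h2 where h2: "grp e2 h2" "k2 \<oplus> h2 = e2" using grp_inv g2 by blast
  have "k1 = k1 \<oplus> e1" using d1 by simp
  also have "\<dots> = k1 \<oplus> g \<oplus> g'" using g'(2) by simp
  also have "\<dots> = k1 \<oplus> e2 \<oplus> e1 \<oplus> g'" unfolding g_def using la[OF d1(3)] by simp
  also have "\<dots> = k1 \<oplus> k2 \<oplus> (h2 \<oplus> (e1 \<oplus> g'))" by (simp add: la[OF h2(2)])
  finally have eq: "k1 = k1 \<oplus> k2 \<oplus> (h2 \<oplus> (e1 \<oplus> g'))" .
  have h2K: "h2 \<in> Ker a"
  proof -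
    have "z h2 = z k2" using z_grp h2(1) e2_def by simp
    then have "rho k2 h2" using rho_z by metis
    then show ?thesis using k2 h2(1) z_grp[OF h2(1)] unfolding Ker_def e2_def
      using rho_trans by auto
  qed
  have eg: "e1 \<oplus> g' \<in> Cls a"
  proof -
    have "e1 \<oplus> g' = g'" using grpD(2)[OF g'(1)] .
    then have "z (e1 \<oplus> g') = z k1" using z_grp[OF g'(1)] e1_def by simp
    then have "rho k1 (e1 \<oplus> g')" using rho_z by metis
    then show ?thesis using k1 unfolding Ker_def Cls_def using rho_trans by auto
  qed
  have "h2 \<oplus> (e1 \<oplus> g') \<in> Ker a" using bi_add_r[OF h2K eg] .
  then show ?thesis using eq by blast
qed

lemma Ker_J: assumes k1: "k1 \<in> Ker a" and k2: "k2 \<in> Ker a"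
  shows "greenJ (Ker a) pl k1 k2"
proof -
  have cl: "\<And>x y. x \<in> Ker a \<Longrightarrow> y \<in> Ker a \<Longrightarrow> x \<oplus> y \<in> Ker a"
    using bi_add_r Ker_Cls by blast
  obtain W where W: "W \<in> Ker a" "k1 = k1 \<oplus> k2 \<oplus> W" using Ker_J1[OF k1 k2] by blast
  obtain W' where W': "W' \<in> Ker a" "k2 = k2 \<oplus> k1 \<oplus> W'" using Ker_J1[OF k2 k1] by blast
  have "tideal (Ker a) pl k1 \<subseteq> tideal (Ker a) pl k2" using tideal_sub[OF cl k1 W(1) W(2)] by blast
  moreover have "tideal (Ker a) pl k2 \<subseteq> tideal (Ker a) pl k1"
    using tideal_sub[OF cl k2 W'(1) W'(2)] by blast
  ultimately show ?thesis unfolding greenJ_def by blast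
qed

lemma Ker_rsr:
  assumes Ec: "\<forall>e\<in>addE pl UNIV. \<forall>f\<in>addE pl UNIV. \<exists>n\<ge>1. N n (e \<oplus> f) = N (n + 1) (e \<oplus> f)"
  shows "rect_skew_ring pl ml (Ker a)"
  unfolding rect_skew_ring_def compl_simple_def
proof (intro conjI ballI)
  show "closed_sub pl ml (Ker a)" using Ker_closed .
  show "\<And>k. k \<in> Ker a \<Longrightarrow> compl_regular (Ker a) pl ml k" using Ker_cr .
  show "\<And>x y. x \<in> Ker a \<Longrightarrow> y \<in> Ker a \<Longrightarrow> greenJ (Ker a) pl x y" using Ker_J .
  fix e f assume e: "e \<in> addE pl (Ker a)" and f: "f \<in> addE pl (Ker a)"
  have eK: "e \<in> Ker a" "e \<oplus> e = e" using e unfolding addE_def by auto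
  have fK: "f \<in> Ker a" "f \<oplus> f = f" using f unfolding addE_def by auto
  have sK: "e \<oplus> f \<in> Ker a" using bi_add_r eK fK Ker_Cls by blast
  then have gs: "grp (z (e \<oplus> f)) (e \<oplus> f)" unfolding Ker_def by auto
  obtain n where n: "n \<ge> 1" "N n (e \<oplus> f) = N (n + 1) (e \<oplus> f)"
    using Ec eK fK unfolding addE_def by blast
  obtain m where m: "n = Suc m" using n(1) by (cases n) auto
  have "N (Suc m) (e \<oplus> f) \<oplus> (e \<oplus> f) = N (Suc m) (e \<oplus> f)"
  proof -
    have "N (Suc m) (e \<oplus> f) = N (Suc (Suc m)) (e \<oplus> f)" using n(2) m by simp
    also have "\<dots> = N (Suc m) (e \<oplus> f) \<oplus> (e \<oplus> f)" by (rule N_SS')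
    finally show ?thesis by simp
  qed
  then have eq: "e \<oplus> f = z (e \<oplus> f)" using grp_cancel[OF gs] by blast
  have "(e \<oplus> f) \<oplus> (e \<oplus> f) = e \<oplus> f" using z_idm[of "e \<oplus> f"] by (simp only: eq[symmetric])
  then show "e \<oplus> f \<in> addE pl (Ker a)" using sK unfolding addE_def by simp
qed

theorem T1:
  assumes Ec: "\<forall>e\<in>addE pl UNIV. \<forall>f\<in>addE pl UNIV. \<exists>n\<ge>1. N n (e \<oplus> f) = N (n + 1) (e \<oplus> f)"
  shows "b_lattice_of_nil_ext_rsr pl ml"
  unfolding b_lattice_of_nil_ext_rsr_def
proof (intro exI[of _ rho] conjI allI)
  show "congruence pl ml rho" using rho_cong .
  show "quotient_b_lattice pl ml rho" using rho_blat .
  fix a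
  show "closed_sub pl ml {x. rho a x}" using Cls_closed unfolding Cls_def .
  show "\<exists>K. nil_extension pl ml {x. rho a x} K \<and> rect_skew_ring pl ml K"
    using nil_ext Ker_rsr[OF Ec] unfolding Cls_def by blast
qed

end

context sr begin

lemma lideal_sub: "b = s \<oplus> a \<Longrightarrow> lideal UNIV pl b \<subseteq> lideal UNIV pl a"
  unfolding lideal_def by (auto simp del: pa simp: pa[symmetric])

lemma rideal_sub: "b = a \<oplus> s \<Longrightarrow> rideal UNIV pl b \<subseteq> rideal UNIV pl a"
  unfolding rideal_def by auto

lemma ideal_grp: assumes "grp e g"
  shows "lideal UNIV pl g = lideal UNIV pl e" "rideal UNIV pl g = rideal UNIV pl e"
proof -
  obtain h where h: "g \<oplus> h = e" "h \<oplus> g = e" using grp_inv assms by blast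
  note d = grpD[OF assms]
  show "lideal UNIV pl g = lideal UNIV pl e"
    using lideal_sub[of g g e] lideal_sub[of e h g] d h by auto
  show "rideal UNIV pl g = rideal UNIV pl e"
    using rideal_sub[of g e g] rideal_sub[of e g h] d h by auto
qed

lemma idm_LR: assumes "u \<oplus> u = u" "v \<oplus> v = v"
  "lideal UNIV pl u = lideal UNIV pl v" "rideal UNIV pl u = rideal UNIV pl v"
  shows "u = v"
proof -
  have "u \<in> lideal UNIV pl v" using assms(3) unfolding lideal_def by auto
  then have "u = v \<or> (\<exists>s. u = s \<oplus> v)" unfolding lideal_def by auto
  then have 1: "u \<oplus> v = u" using assms(2) by auto
  have "v \<in> rideal UNIV pl u" using assms(4) unfolding rideal_def by auto
  then have "v = u \<or> (\<exists>s. v = u \<oplus> s)" unfolding rideal_def by auto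
  then have 2: "u \<oplus> v = v" using assms(1) la[OF assms(1)] by auto
  show ?thesis using 1 2 by simp
qed

lemma grp_of_sq: assumes "a \<oplus> a \<oplus> s = a" "t \<oplus> a \<oplus> a = a" shows "grp (a \<oplus> s) a"
proof -
  define e where "e = a \<oplus> s"
  have ae: "a \<oplus> e = a" unfolding e_def using assms(1) by simp
  have "t \<oplus> a = t \<oplus> (a \<oplus> a \<oplus> s)" using assms(1) by simp
  also have "\<dots> = a \<oplus> s" using la[OF assms(2), of s] by simp
  finally have et: "e = t \<oplus> a" unfolding e_def by simp
  have ea: "e \<oplus> a = a" using et assms(2) by simp
  have ee: "e \<oplus> e = e" using la[OF ea, of s] by (simp add: e_def[symmetric])
  have 1: "a \<oplus> (e \<oplus> s) = e" using la[OF ae, of s] by (simp add: e_def[symmetric])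
  have "(e \<oplus> s) \<oplus> a = t \<oplus> (a \<oplus> s) \<oplus> a" using et by simp
  also have "\<dots> = t \<oplus> a" using ea by (simp add: e_def[symmetric])
  finally have 2: "(e \<oplus> s) \<oplus> a = e" using et by simp
  show ?thesis using grpI[OF ee ea ae 1 2] unfolding e_def .
qed

lemma mreg_prop: assumes "add_quasi_regular pl"
  shows "1 \<le> mreg pl b \<and> add_regular UNIV pl (N (mreg pl b) b)"
proof -
  have "\<exists>n. 1 \<le> n \<and> add_regular UNIV pl (N n b)"
    using assms unfolding add_quasi_regular_def by blast
  then show ?thesis unfolding mreg_def by (rule LeastI_ex)
qed

lemma mreg_1: assumes "add_regular UNIV pl b" shows "mreg pl b = 1"
  unfolding mreg_def
proof (rule Least_equality)
  show "1 \<le> (1::nat) \<and> add_regular UNIV pl (N 1 b)" using assms by simp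
qed simp

end

context qcr begin

lemma zpl_dup: "z (a \<oplus> (x \<oplus> x) \<oplus> b) = z (a \<oplus> x \<oplus> b)"
  by (metis zpl4 z_2)

lemma qcr_aqr: "add_quasi_regular pl"
  unfolding add_quasi_regular_def add_regular_def
  using qcr unfolding quasi_compl_regular_def compl_regular_def by blast

lemma reg_z: assumes "1 \<le> m" "add_regular UNIV pl (N m b)"
  shows "grp (z b) (N m b)"
proof -
  obtain x where "N m b = N m b \<oplus> x \<oplus> N m b" using assms(2) unfolding add_regular_def by auto
  then have "N m b \<oplus> x \<oplus> N m b = N m b" by simp
  then have "grp (z (N m b)) (N m b)" by (rule Reg)
  moreover obtain m' where "m = Suc m'" using assms(1) by (cases m) auto
  ultimately show ?thesis using z_N by simp
qed

lemma Hstar_sq: "Hstar pl (b \<otimes> b) b"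
proof -
  have A: "add_quasi_regular pl" by (rule qcr_aqr)
  define b1 where "b1 = N (mreg pl (b \<otimes> b)) (b \<otimes> b)"
  define b2 where "b2 = N (mreg pl b) b"
  have g1: "grp (z (b \<otimes> b)) b1" unfolding b1_def using reg_z mreg_prop[OF A] by blast
  have g2: "grp (z b) b2" unfolding b2_def using reg_z mreg_prop[OF A] by blast
  have zb: "z (b \<otimes> b) = z b" using F4 zz_ml by simp
  show ?thesis unfolding Hstar_def Lstar_def Rstar_def greenL_def greenR_def
    using ideal_grp[OF g1] ideal_grp[OF g2] zb b1_def b2_def by simp
qed

end

context sr begin

lemma blat_qcr: assumes "b_lattice_of_nil_ext_rsr pl ml" shows "quasi_compl_regular pl ml"
  unfolding quasi_compl_regular_def
proof
  fix a
  obtain r where r: "congruence pl ml r"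
    "\<forall>a. closed_sub pl ml {x. r a x} \<and> (\<exists>K. nil_extension pl ml {x. r a x} K \<and> rect_skew_ring pl ml K)"
    using assms unfolding b_lattice_of_nil_ext_rsr_def by blast
  obtain K where K: "nil_extension pl ml {x. r a x} K" "rect_skew_ring pl ml K" using r(2) by blast
  have "r a a" using r(1) unfolding congruence_def by (meson equivp_reflp)
  then obtain n where n: "n \<ge> 1" "N n a \<in> K" using K(1) unfolding nil_extension_def by blast
  have "compl_regular K pl ml (N n a)" using K(2) n(2) unfolding rect_skew_ring_def compl_simple_def by blast
  then have "compl_regular UNIV pl ml (N n a)" unfolding compl_regular_def by blast
  then show "\<exists>n\<ge>1. compl_regular UNIV pl ml (N n a)" using n(1) by blast
qed

end

context qcr begin

lemma T2: assumes bl: "b_lattice_of_nil_ext_rsr pl ml"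
  shows "add_quasi_regular pl \<and> (\<forall>b. Hstar pl (b \<otimes> b) b) \<and>
            (\<forall>a x. a = a \<oplus> x \<oplus> a \<longrightarrow> a = (a \<oplus> N 2 x) \<oplus> N 2 a)"
proof (intro conjI allI impI)
  show "add_quasi_regular pl" by (rule qcr_aqr)
  show "\<And>b. Hstar pl (b \<otimes> b) b" by (rule Hstar_sq)
  fix a x assume ax: "a = a \<oplus> x \<oplus> a"
  obtain r where r: "congruence pl ml r" "quotient_b_lattice pl ml r"
    "\<forall>a. closed_sub pl ml {x. r a x} \<and> (\<exists>K. nil_extension pl ml {x. r a x} K \<and> rect_skew_ring pl ml K)"
    using bl unfolding b_lattice_of_nil_ext_rsr_def by blast
  have eqv: "equivp r" using r(1) unfolding congruence_def by blast
  have rr: "\<And>x. r x x" using eqv by (meson equivp_reflp)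
  have rs: "\<And>x y. r x y \<Longrightarrow> r y x" using eqv by (meson equivp_symp)
  have rt: "\<And>x y w. r x y \<Longrightarrow> r y w \<Longrightarrow> r x w" using eqv by (meson equivp_transp)
  have radd: "\<And>a b c d. r a b \<Longrightarrow> r c d \<Longrightarrow> r (a \<oplus> c) (b \<oplus> d)"
    using r(1) unfolding congruence_def by blast
  have rc: "\<And>a b. r (a \<oplus> b) (b \<oplus> a)" and r2: "\<And>a. r (a \<oplus> a) a"
    using r(2) unfolding quotient_b_lattice_def by auto
  have raba: "\<And>a b. r (a \<oplus> b \<oplus> a) (a \<oplus> b)"
  proof -
    fix a b
    have "r (a \<oplus> (b \<oplus> a)) (a \<oplus> (a \<oplus> b))" using radd[OF rr rc] .
    moreover have "r ((a \<oplus> a) \<oplus> b) (a \<oplus> b)" using radd[OF r2 rr] .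
    ultimately show "r (a \<oplus> b \<oplus> a) (a \<oplus> b)" using rt by simp
  qed
  have raba': "\<And>a b. r (a \<oplus> b \<oplus> a) (b \<oplus> a)" using raba rc rt by blast
  obtain K where K: "nil_extension pl ml {y. r a y} K" "rect_skew_ring pl ml K" using r(3) by blast
  have KC: "K \<subseteq> {y. r a y}" and bi: "\<And>k y. k \<in> K \<Longrightarrow> r a y \<Longrightarrow> k \<oplus> y \<in> K \<and> y \<oplus> k \<in> K"
    and nil: "\<And>y. r a y \<Longrightarrow> \<exists>n\<ge>1. N n y \<in> K"
    using K(1) unfolding nil_extension_def by auto
  have grK: "g \<in> K" if g: "r a g" "grp e g" for g e
  proof -
    obtain n where n: "n \<ge> 1" "N n g \<in> K" using nil g(1) by blast
    obtain m where m: "n = Suc m" using n(1) by (cases n) auto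
    define G where "G = N n g"
    have gG: "grp e G" unfolding G_def m using grp_N g(2) by blast
    obtain w where w: "grp e w" "G \<oplus> w = e" "w \<oplus> G = e" using grp_inv gG by blast
    have "G \<oplus> w \<oplus> G = G" using la[OF w(2), of G] grpD(2)[OF gG] by simp
    then have 1: "r G (G \<oplus> w)" using raba[of G w] by simp
    have "w \<oplus> G \<oplus> w = w" using la[OF w(3), of w] grpD(2)[OF w(1)] by simp
    then have 2: "r w (w \<oplus> G)" using raba[of w G] by simp
    have "r G w" using rt[OF 1 rt[OF rc rs[OF 2]]] .
    moreover have "r a G" using KC n(2) G_def by auto
    ultimately have "r a w" using rt by blast
    then have "e \<in> K" using bi[of G w] n(2) w(2) G_def by auto
    then have "e \<oplus> g \<in> K" using bi g(1) by blast
    then show ?thesis using grpD(2)[OF g(2)] by simp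
  qed
  define f where "f = a \<oplus> x"
  define e where "e = x \<oplus> a"
  have ff: "f \<oplus> f = f" unfolding f_def using ax by (metis pa)
  have ee: "e \<oplus> e = e" unfolding e_def using ax by (metis pa)
  have rf: "r a f" unfolding f_def using raba[of a x] ax by simp
  have re: "r a e" unfolding e_def using raba'[of a x] ax by simp
  have fK: "f \<in> K" using grK[OF rf grp_self[OF ff]] .
  have eK: "e \<in> K" using grK[OF re grp_self[OF ee]] .
  have "f \<oplus> e \<in> addE pl K" using K(2) fK eK ff ee unfolding rect_skew_ring_def addE_def by blast
  then have wi: "(f \<oplus> e) \<oplus> (f \<oplus> e) = f \<oplus> e" unfolding addE_def by simp
  define c where "c = z a"
  have ga: "grp c a" unfolding c_def using Reg[of a x] ax[symmetric] by blast
  note da = grpD[OF ga]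
  have "c \<oplus> (f \<oplus> e) = f \<oplus> e" unfolding f_def e_def using la[OF da(2)] by simp
  moreover have "(f \<oplus> e) \<oplus> c = f \<oplus> e" unfolding f_def e_def using da(3) by simp
  moreover have "z (f \<oplus> e) = c"
  proof -
    have "z (f \<oplus> e) = z (a \<oplus> (x \<oplus> x) \<oplus> a)" unfolding f_def e_def by simp
    also have "\<dots> = z (a \<oplus> x \<oplus> a)" by (rule zpl_dup)
    finally show ?thesis using ax c_def by simp
  qed
  ultimately have "grp c (f \<oplus> e)" using F7 da(1) by blast
  then have fe: "f \<oplus> e = c" using grp_idem_eq wi by blast
  have "(a \<oplus> N 2 x) \<oplus> N 2 a = (f \<oplus> e) \<oplus> a" unfolding f_def e_def by (simp add: numeral_2_eq_2 nsm.simps)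
  also have "\<dots> = a" using fe da(2) by simp
  finally show "a = (a \<oplus> N 2 x) \<oplus> N 2 a" by simp
qed

end

context sr begin

lemma N2: "N 2 x = x \<oplus> x" by (simp add: numeral_2_eq_2)

lemma la3: "a \<oplus> (b \<oplus> c) = d \<Longrightarrow> a \<oplus> (b \<oplus> (c \<oplus> y)) = d \<oplus> y"
  by (metis pa)

lemma iii_reg: assumes C3: "\<forall>a x. a = a \<oplus> x \<oplus> a \<longrightarrow> a = (a \<oplus> N 2 x) \<oplus> N 2 a"
  and ax: "a \<oplus> x \<oplus> a = a" shows "\<exists>e. grp e a"
proof -
  have C: "\<And>a x. a \<oplus> x \<oplus> a = a \<Longrightarrow> a \<oplus> x \<oplus> x \<oplus> a \<oplus> a = a"
    using C3 unfolding N2 by (metis pa)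
  have t: "(a \<oplus> x \<oplus> x) \<oplus> a \<oplus> a = a" using C[OF ax] by simp
  define x' where "x' = x \<oplus> a \<oplus> x"
  have x'1: "a \<oplus> x' \<oplus> a = a" unfolding x'_def using la[OF ax, of "x \<oplus> a"] ax by simp
  have x'2: "x' \<oplus> a \<oplus> x' = x'" unfolding x'_def by (simp add: la3[OF ax])
  have x'3: "x' \<oplus> a \<oplus> a \<oplus> x' \<oplus> x' = x'" using C[OF x'2] .
  have "a \<oplus> a \<oplus> (x' \<oplus> x' \<oplus> a) = (a \<oplus> x' \<oplus> a) \<oplus> a \<oplus> x' \<oplus> x' \<oplus> a" using x'1 by simp
  also have "\<dots> = a \<oplus> (x' \<oplus> a \<oplus> a \<oplus> x' \<oplus> x') \<oplus> a" by simp
  also have "\<dots> = a" using x'3 x'1 by simp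
  finally have s: "a \<oplus> a \<oplus> (x' \<oplus> x' \<oplus> a) = a" .
  show ?thesis using grp_of_sq[OF s t] by blast
qed

lemma T3_qcr: assumes aqr: "add_quasi_regular pl" and H: "\<forall>b. Hstar pl (b \<otimes> b) b"
  and C3: "\<forall>a x. a = a \<oplus> x \<oplus> a \<longrightarrow> a = (a \<oplus> N 2 x) \<oplus> N 2 a"
  shows "quasi_compl_regular pl ml"
  unfolding quasi_compl_regular_def
proof
  fix a
  obtain n where n: "1 \<le> n" "add_regular UNIV pl (N n a)"
    using aqr unfolding add_quasi_regular_def by blast
  define b where "b = N n a"
  obtain x where x: "b \<oplus> x \<oplus> b = b" using n(2) unfolding add_regular_def b_def by (metis pa)
  obtain e where e: "grp e b" using iii_reg[OF C3 x] by blast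
  obtain h where h: "grp e h" "b \<oplus> h = e" "h \<oplus> b = e" using grp_inv e by blast
  have m1: "mreg pl b = 1" using mreg_1 n(2) b_def by simp
  obtain m where m: "1 \<le> mreg pl (b \<otimes> b)" using mreg_prop[OF aqr] by blast
  obtain m' where m': "mreg pl (b \<otimes> b) = Suc m'" using m by (cases "mreg pl (b \<otimes> b)") auto
  have g1: "grp (b \<otimes> e) (N (mreg pl (b \<otimes> b)) (b \<otimes> b))"
    unfolding m' using grp_N[OF grp_mr[OF e]] .
  have HH: "Hstar pl (b \<otimes> b) b" using H by blast
  have L: "lideal UNIV pl (b \<otimes> e) = lideal UNIV pl e"
    using HH ideal_grp(1)[OF g1] ideal_grp(1)[OF e] m1
    unfolding Hstar_def Lstar_def greenL_def by simp
  have R: "rideal UNIV pl (b \<otimes> e) = rideal UNIV pl e"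
    using HH ideal_grp(2)[OF g1] ideal_grp(2)[OF e] m1
    unfolding Hstar_def Rstar_def greenR_def by simp
  have be: "b \<otimes> e = e" using idm_LR[OF idm_mr[OF grpD(1)[OF e]] grpD(1)[OF e] L R] .
  have "compl_regular UNIV pl ml b"
    unfolding compl_regular_def
    using h grpD(2)[OF e] be la[OF h(2), of b] by (intro bexI[of _ h]) auto
  then show "\<exists>n\<ge>1. compl_regular UNIV pl ml (N n a)" using n(1) b_def by blast
qed

end

context qcr begin

lemma rect3: assumes C3: "\<forall>a x. a = a \<oplus> x \<oplus> a \<longrightarrow> a = (a \<oplus> N 2 x) \<oplus> N 2 a"
  and u: "u \<oplus> u = u" and v: "v \<oplus> v = v" and g: "grp c (u \<oplus> v)"
  shows "(u \<oplus> v) \<oplus> (u \<oplus> v) = u \<oplus> v"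
proof -
  define a where "a = u \<oplus> v"
  have ga: "grp c a" using g a_def by simp
  note d = grpD[OF ga]
  obtain w where w: "a \<oplus> w = c" "w \<oplus> a = c" using grp_inv ga by blast
  define x where "x = v \<oplus> w \<oplus> u"
  have av: "a \<oplus> v = a" unfolding a_def using v by simp
  have ua: "u \<oplus> a = a" unfolding a_def using la[OF u] by simp
  have ax: "a \<oplus> x = c \<oplus> u" unfolding x_def by (simp add: la[OF av] la[OF w(1)])
  have xa: "x \<oplus> a = v \<oplus> c" unfolding x_def by (simp add: ua w(2))
  have axa: "a \<oplus> x \<oplus> a = a" using la[OF ax, of a] ua d(2) by simp
  have "a = (a \<oplus> N 2 x) \<oplus> N 2 a" using C3[rule_format, OF axa[symmetric]] .
  also have "\<dots> = (a \<oplus> x) \<oplus> (x \<oplus> a) \<oplus> a" unfolding N2 by simp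
  also have "\<dots> = (c \<oplus> u) \<oplus> (v \<oplus> c) \<oplus> a" unfolding ax xa by simp
  also have "\<dots> = c \<oplus> a \<oplus> c \<oplus> a" by (simp add: a_def)
  also have "\<dots> = a \<oplus> a" by (simp add: la[OF d(3)] la[OF d(2)])
  finally show ?thesis unfolding a_def by simp
qed

end

context qcr begin

lemma T3_E: assumes C3: "\<forall>a x. a = a \<oplus> x \<oplus> a \<longrightarrow> a = (a \<oplus> N 2 x) \<oplus> N 2 a"
  shows "\<forall>e\<in>addE pl UNIV. \<forall>f\<in>addE pl UNIV. \<exists>n\<ge>1. N n (e \<oplus> f) = N (n + 1) (e \<oplus> f)"
proof (intro ballI)
  fix e f assume "e \<in> addE pl UNIV" "f \<in> addE pl UNIV"
  then have ee: "e \<oplus> e = e" and ff: "f \<oplus> f = f" unfolding addE_def by auto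
  define q where "q = e \<oplus> f"
  define p where "p = z q"
  have pp: "p \<oplus> p = p" unfolding p_def using z_idm .
  have ep: "e \<oplus> p = p" unfolding p_def q_def using P2[of e f] z_of_idm[OF ee] by simp
  have pf: "p \<oplus> f = p" unfolding p_def q_def using P2'[of e f] z_of_idm[OF ff] by simp
  define u where "u = p \<oplus> e"
  define v where "v = f \<oplus> p"
  have uu: "u \<oplus> u = u" unfolding u_def by (simp add: la[OF ep] la[OF pp])
  have vv: "v \<oplus> v = v" unfolding v_def by (simp add: la[OF pf] pp)
  have uv: "u \<oplus> v = p \<oplus> q \<oplus> p" unfolding u_def v_def q_def by simp
  have zqqq: "z (q \<oplus> q \<oplus> q) = z q"
  proof -
    have "z (q \<oplus> q \<oplus> q) = z (q \<oplus> z (q \<oplus> q))" by simp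
    also have "\<dots> = z q" using z_2 by simp
    finally show ?thesis .
  qed
  have zg: "z (p \<oplus> q \<oplus> p) = p"
  proof -
    have "z (p \<oplus> q \<oplus> p) = z (q \<oplus> q \<oplus> q)" unfolding p_def by simp
    then show ?thesis using zqqq p_def by simp
  qed
  have "p \<oplus> (p \<oplus> q \<oplus> p) = p \<oplus> q \<oplus> p" by (simp add: la[OF pp])
  moreover have "(p \<oplus> q \<oplus> p) \<oplus> p = p \<oplus> q \<oplus> p" using pp by simp
  ultimately have gg: "grp p (p \<oplus> q \<oplus> p)" using F7 pp zg by blast
  have "(u \<oplus> v) \<oplus> (u \<oplus> v) = u \<oplus> v" using rect3[OF C3 uu vv] gg uv by simp
  then have pqp: "p \<oplus> q \<oplus> p = p" using grp_idem_eq[OF gg] uv by simp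
  have pqi: "(p \<oplus> q) \<oplus> (p \<oplus> q) = p \<oplus> q" using la3[OF pqp, of q] by simp
  have "z (p \<oplus> q) = p" unfolding p_def using z_2 by simp
  then have pq: "p \<oplus> q = p" using z_of_idm[OF pqi] by simp
  have pN: "p \<oplus> N (Suc k) q = p" for k
  proof (induction k)
    case 0 then show ?case using pq by simp
  next
    case (Suc k) then show ?case by (simp add: N_SS la[OF pq])
  qed
  obtain n where n: "grp p (N (Suc n) q)" using z_ex p_def by blast
  have 1: "N (Suc n) q = p" using pN[of n] grpD(2)[OF n] by simp
  have 2: "N (Suc n + 1) q = p" using 1 pq by (simp add: N_SS')
  show "\<exists>n\<ge>1. N n (e \<oplus> f) = N (n + 1) (e \<oplus> f)"
    using 1 2 q_def by (intro exI[of _ "Suc n"]) simp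
qed

end

theorem theorem3p4:
  fixes pl ml :: "'a \<Rightarrow> 'a \<Rightarrow> 'a"
  assumes "semiring pl ml"
  shows "(b_lattice_of_nil_ext_rsr pl ml \<longleftrightarrow>
           (quasi_compl_regular pl ml \<and>
            (\<forall>e\<in>addE pl UNIV. \<forall>f\<in>addE pl UNIV. \<exists>n\<ge>1.
                nsm pl n (pl e f) = nsm pl (n + 1) (pl e f))))
       \<and> ((quasi_compl_regular pl ml \<and>
            (\<forall>e\<in>addE pl UNIV. \<forall>f\<in>addE pl UNIV. \<exists>n\<ge>1.
                nsm pl n (pl e f) = nsm pl (n + 1) (pl e f)))
          \<longleftrightarrow>
           (add_quasi_regular pl \<and> (\<forall>b. Hstar pl (ml b b) b) \<and>
            (\<forall>a x. a = pl (pl a x) a \<longrightarrow>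
                   a = pl (pl a (nsm pl 2 x)) (nsm pl 2 a))))"
proof -
  interpret sr pl ml using assms by (rule sr.intro)
  let ?E = "\<forall>e\<in>addE pl UNIV. \<forall>f\<in>addE pl UNIV. \<exists>n\<ge>1. nsm pl n (pl e f) = nsm pl (n + 1) (pl e f)"
  let ?iii = "add_quasi_regular pl \<and> (\<forall>b. Hstar pl (ml b b) b) \<and>
            (\<forall>a x. a = pl (pl a x) a \<longrightarrow> a = pl (pl a (nsm pl 2 x)) (nsm pl 2 a))"
  have Q: "qcr pl ml" if "quasi_compl_regular pl ml"
    using assms that by (intro qcr.intro sr.intro) (simp_all add: qcr_axioms_def)
  have t1: "b_lattice_of_nil_ext_rsr pl ml" if "quasi_compl_regular pl ml" ?E
    using qcr.T1[OF Q[OF that(1)] that(2)] .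
  have t2: ?iii if "b_lattice_of_nil_ext_rsr pl ml"
  proof -
    have "quasi_compl_regular pl ml" using blat_qcr[OF that] .
    then show ?thesis using qcr.T2[OF Q that] by simp
  qed
  have t3: "quasi_compl_regular pl ml \<and> ?E" if ?iii
  proof -
    have C3: "\<forall>a x. a = pl a (pl x a) \<longrightarrow> a = pl (pl a (nsm pl 2 x)) (nsm pl 2 a)"
      using conjunct2[OF conjunct2[OF that]] by (simp only: pa)
    have q: "quasi_compl_regular pl ml" using T3_qcr that C3 by blast
    then show ?thesis using qcr.T3_E[OF Q[OF q] C3] by simp
  qed
  show ?thesis using t1 t2 t3 by blast
qed

end
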